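(* Let $\mathcal Q_{round}$ be the set of product measures $\mathrm{Prod}(q)$ with $q\in[0,1]^{\mathbb N}$ such that for every $n\in\mathbb N$, $q_{2n-1}\in\{\tfrac13,\tfrac23\}$ and $q_{2n}=\mathbb 1[q_{2n-1}=\tfrac23]$. Then $\mathcal Q_{round}$ is UME-learnable.
   Context: $\mathrm{Prod}(q)$ is the product measure on $\{0,1\}^{\mathbb N}$ with independent coordinates $X_j\sim\mathrm{Bernoulli}(q_j)$; its mean vector $\mathrm{Mean}(\mathrm{Prod}(q))$ is $q$. A collection $\mathcal Q$ of probability measures on $\{0,1\}^{\mathbb N}$ is UME-learnable if there exist (measurable) estimators $\mathcal A_n:(\{0,1\}^{\mathbb N})^n\to[0,1]^{\mathbb N}$ such that for every $\mu\in\mathcal Q$, $\mathbb E_{S\sim\mu^n}\|\mathcal A_n(S)-\mathrm{Mean}(\mu)\|_\infty\to0$ as $n\to\infty$, where $S$ consists of $n$ i.i.d. draws from $\mu$ and $\mathrm{Mean}(\mu)_j=\mathbb E[X_j]$. *)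

theory Defs
  imports "HOL-Probability.Probability"
begin

text \<open>Points of {0,1}^N are functions nat => bool; coordinate j (0-based) corresponds
to the paper's coordinate j+1.\<close>

definition cube :: "(nat \<Rightarrow> bool) measure" where
  "cube = PiM UNIV (\<lambda>_. count_space UNIV)"

definition Prod :: "(nat \<Rightarrow> real) \<Rightarrow> (nat \<Rightarrow> bool) measure" where
  "Prod q = PiM UNIV (\<lambda>j. measure_pmf (bernoulli_pmf (q j)))"

definition Mean :: "(nat \<Rightarrow> bool) measure \<Rightarrow> nat \<Rightarrow> real" where
  "Mean \<mu> j = (LINT x|\<mu>. (if x j then 1 else 0))"

definition UME_learnable :: "(nat \<Rightarrow> bool) measure set \<Rightarrow> bool" where
  "UME_learnable Q \<longleftrightarrow>
     (\<exists>A :: nat \<Rightarrow> (nat \<Rightarrow> nat \<Rightarrow> bool) \<Rightarrow> nat \<Rightarrow> real.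
        (\<forall>n. A n \<in> measurable (PiM {..<n} (\<lambda>_. cube)) (PiM UNIV (\<lambda>_. borel))
              \<and> (\<forall>S j. A n S j \<in> {0..1})) \<and>
        (\<forall>\<mu>\<in>Q. ((\<lambda>n. \<integral>\<^sup>+ S. (SUP j. ennreal \<bar>A n S j - Mean \<mu> j\<bar>) \<partial>(PiM {..<n} (\<lambda>_. \<mu>)))
                 \<longlongrightarrow> 0) sequentially))"

definition Q_round :: "(nat \<Rightarrow> bool) measure set" where
  "Q_round = {Prod q | q. (\<forall>j. q j \<in> {0..1}) \<and>
      (\<forall>k. q (2*k) \<in> {1/3, 2/3} \<and> q (2*k+1) = (if q (2*k) = 2/3 then 1 else 0))}"

end

theory Submission
  imports Defs
begin

definition gfun :: "nat \<Rightarrow> bool \<Rightarrow> real" where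
  "gfun j b = (if even j then (if b then 2/3 else 1/3) else (if b then 1 else 0))"

definition est :: "nat \<Rightarrow> (nat \<Rightarrow> nat \<Rightarrow> bool) \<Rightarrow> nat \<Rightarrow> real" where
  "est n S j = (if n = 0 then 0 else gfun j (S 0 (2*(j div 2)+1)))"

lemma est_meas: "est n \<in> measurable (PiM {..<n} (\<lambda>_. cube)) (PiM UNIV (\<lambda>_. borel))"
proof (rule measurable_PiM_single')
  fix j :: nat
  show "(\<lambda>S. est n S j) \<in> borel_measurable (PiM {..<n} (\<lambda>_. cube))"
  proof (cases "n = 0")
    case True then show ?thesis by (simp add: est_def)
  next
    case False
    have h1: "(\<lambda>S. S 0) \<in> measurable (PiM {..<n} (\<lambda>_. cube)) cube"
      using False by (intro measurable_component_singleton) auto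
    have h2: "(\<lambda>x. x (2*(j div 2)+1)) \<in> measurable cube (count_space UNIV)"
      unfolding cube_def by (rule measurable_component_singleton) auto
    have h3: "gfun j \<in> borel_measurable (count_space UNIV)" by simp
    have "(\<lambda>S. gfun j (S 0 (2*(j div 2)+1))) \<in> borel_measurable (PiM {..<n} (\<lambda>_. cube))"
      using measurable_compose[OF measurable_compose[OF h1 h2] h3] by (simp add: o_def)
    then show ?thesis using False by (simp add: est_def)
  qed
qed (auto simp: space_PiM)

lemma Mean_Prod:
  assumes "\<forall>j. q j \<in> {0..1}"
  shows "Mean (Prod q) j = q j"
proof -
  have ps: "\<And>i. i \<in> UNIV \<Longrightarrow> prob_space (measure_pmf (bernoulli_pmf (q i)))"
    by (rule prob_space_measure_pmf)
  have "Mean (Prod q) j = (LINT x|Prod q. (\<lambda>b. if b then 1 else 0::real) (x j))"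
    by (simp add: Mean_def)
  also have "\<dots> = (LINT b|distr (Prod q) (measure_pmf (bernoulli_pmf (q j))) (\<lambda>x. x j). (if b then 1 else 0::real))"
    unfolding Prod_def
    by (rule integral_distr[symmetric]) (auto intro: measurable_component_singleton)
  also have "\<dots> = (LINT b|measure_pmf (bernoulli_pmf (q j)). (if b then 1 else 0::real))"
    unfolding Prod_def by (subst distr_PiM_component[OF ps]) auto
  also have "\<dots> = q j" using assms by (subst integral_bernoulli_pmf) auto
  finally show ?thesis .
qed

lemma AE_est:
  assumes q: "\<forall>j. q j \<in> {0..1}"
    "\<forall>k. q (2*k) \<in> {1/3, 2/3} \<and> q (2*k+1) = (if q (2*k) = 2/3 then 1 else 0)"
    and n: "n > 0"
  shows "AE S in PiM {..<n} (\<lambda>_. Prod q). \<forall>j. est n S j = q j"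
proof (subst AE_all_countable, intro allI)
  fix j :: nat
  define k where "k = j div 2"
  define m where "m = 2*k+1"
  have ps: "\<And>i. i \<in> UNIV \<Longrightarrow> prob_space (measure_pmf (bernoulli_pmf (q i)))"
    by (rule prob_space_measure_pmf)
  have psP: "\<And>i. i \<in> {..<n} \<Longrightarrow> prob_space (Prod q)"
    unfolding Prod_def by (rule prob_space_PiM) (rule prob_space_measure_pmf)
  have "\<forall>y\<in>set_pmf (bernoulli_pmf (q m)). gfun j y = q j"
  proof
    fix y assume y: "y \<in> set_pmf (bernoulli_pmf (q m))"
    have qm: "q m = (if q (2*k) = 2/3 then 1 else 0)" using q(2) by (simp add: m_def)
    have yv: "y = (q (2*k) = 2/3)"
      using y q(1) qm by (cases y) (auto simp: set_pmf_iff split: if_splits)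
    show "gfun j y = q j"
    proof (cases "even j")
      case True
      then have "j = 2*k" by (simp add: k_def)
      then show ?thesis using yv True q(2)[rule_format, of k] by (auto simp: gfun_def)
    next
      case False
      then have "j = 2*k+1" by (simp add: k_def)
      then show ?thesis using yv False q(2)[rule_format, of k] by (auto simp: gfun_def)
    qed
  qed
  then have AEb: "AE y in measure_pmf (bernoulli_pmf (q m)). gfun j y = q j"
    by (simp add: AE_measure_pmf_iff)
  then have "AE x in Prod q. gfun j (x m) = q j"
    unfolding Prod_def using AE_PiM_component[where I=UNIV and M="\<lambda>i. measure_pmf (bernoulli_pmf (q i))" and P="\<lambda>y. gfun j y = q j" and i=m, OF _ _ AEb] by (auto intro: prob_space_measure_pmf)
  then have "AE S in PiM {..<n} (\<lambda>_. Prod q). gfun j (S 0 m) = q j"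
    using n by (intro AE_PiM_component[where I="{..<n}" and M="\<lambda>_. Prod q" and P="\<lambda>x. gfun j (x m) = q j" and i=0] psP) auto
  then show "AE S in PiM {..<n} (\<lambda>_. Prod q). est n S j = q j"
    using n by (simp add: est_def m_def k_def)
qed

theorem mainTheorem9:
  shows "UME_learnable Q_round"
  unfolding UME_learnable_def
proof (intro exI conjI allI ballI)
  fix n
  show "est n \<in> measurable (PiM {..<n} (\<lambda>_. cube)) (PiM UNIV (\<lambda>_. borel))" by (rule est_meas)
next
  fix n S j
  show "est n S j \<in> {0..1}" by (auto simp: est_def gfun_def)
next
  fix \<mu> assume "\<mu> \<in> Q_round"
  then obtain q where mu: "\<mu> = Prod q" and q: "\<forall>j. q j \<in> {0..1}"
    "\<forall>k. q (2*k) \<in> {1/3, 2/3} \<and> q (2*k+1) = (if q (2*k) = 2/3 then 1 else 0)"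
    unfolding Q_round_def by blast
  have "\<forall>\<^sub>F n in sequentially. (\<integral>\<^sup>+ S. (SUP j. ennreal \<bar>est n S j - Mean \<mu> j\<bar>) \<partial>(PiM {..<n} (\<lambda>_. \<mu>))) = 0"
    using eventually_gt_at_top[of 0]
  proof eventually_elim
    case (elim n)
    have "AE S in PiM {..<n} (\<lambda>_. \<mu>). (SUP j. ennreal \<bar>est n S j - Mean \<mu> j\<bar>) = 0"
      using AE_est[OF q elim] unfolding mu by eventually_elim (simp add: Mean_Prod[OF q(1)])
    then show ?case by (simp add: nn_integral_cong_AE)
  qed
  then show "((\<lambda>n. \<integral>\<^sup>+ S. (SUP j. ennreal \<bar>est n S j - Mean \<mu> j\<bar>) \<partial>(PiM {..<n} (\<lambda>_. \<mu>))) \<longlongrightarrow> 0) sequentially"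
    by (rule tendsto_eventually)
qed

end
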